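(* For all $0<x,y\le1$, $$\frac{|K_2(x,y)|}{x}\le\frac1{12}+\frac{x}{(36\sqrt3)\,y}+\frac1{2y^2}\Big|\sum_{m>1/y}\frac{\widetilde B_2\left(\frac{my}{x}\right)}{m^2}\Big|$$ (the sum over integers $m>1/y$), $$|K_2(x,y)|\le\Big(\frac14+\frac1{36\sqrt3}\Big)\frac{\min\{x,y\}}{\max\{x,y\}},$$ and $$\Big|K_2(x,x)-\frac1{12}\Big|\le\Big(\frac16+\frac1{36\sqrt3}\Big)x.$$
   Context: Let $K:[0,1]\times[0,1]\to\mathbb R$ be defined by $K(x,y)=\frac12-\{(xy)^{-1}\}$ if $0<x,y\le 1$, and $K(x,y)=0$ if $0\le x,y\le1$ and $xy=0$, where $\{\alpha\}=\alpha-\lfloor\alpha\rfloor$. Define $K_2(x,y)=\int_0^1K(x,z)K(z,y)\,dz$ for $0\le x,y\le1$. The periodic Bernoulli function is $\widetilde B_2(t)=\{t\}^2-\{t\}+\frac16$ for $t\in\mathbb R$. *)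

theory Defs
  imports "HOL-Analysis.Analysis"
begin

definition K :: "real \<Rightarrow> real \<Rightarrow> real" where
  "K x y = (if x * y = 0 then 0 else 1/2 - frac (1 / (x * y)))"

definition K2 :: "real \<Rightarrow> real \<Rightarrow> real" where
  "K2 x y = integral {0..1} (\<lambda>z. K x z * K z y)"

definition B2t :: "real \<Rightarrow> real" where
  "B2t t = (frac t)^2 - frac t + 1/6"

end

theory Submission
  imports Defs
begin
definition B1 :: "real \<Rightarrow> real" where "B1 t = 1/2 - frac t"
definition B3t :: "real \<Rightarrow> real" where "B3t t = (frac t)^3 - 3/2 * (frac t)^2 + 1/2 * frac t"

lemma B1_bound: "\<bar>B1 t\<bar> \<le> 1/2"
  unfolding B1_def using frac_ge_0[of t] frac_lt_1[of t] by linarith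

lemma B2t_bound: "\<bar>B2t t\<bar> \<le> 1/6"
proof -
  have a: "0 \<le> frac t" "frac t < 1" by (auto simp: frac_lt_1)
  have "frac t ^2 \<le> frac t" using a by (simp add: power2_eq_square mult_le_cancel_right1 mult_left_le)
  moreover have "frac t ^2 - frac t + 1/4 \<ge> 0" 
    using sum_squares_ge_zero[of "frac t - 1/2" 0] by (simp add: power2_eq_square algebra_simps)
  ultimately show ?thesis unfolding B2t_def using a by (simp add: abs_if)
qed

lemma B3_poly_bound:
  fixes u :: real assumes "0 \<le> u" "u \<le> 1"
  shows "\<bar>u^3 - 3/2*u^2 + 1/2*u\<bar> \<le> sqrt 3 / 36"
proof -
  define s where "s = u - 1/2"
  define a where "a = sqrt 3 / 6"
  have a3: "a^2 = 1/12" unfolding a_def by (simp add: power_divide)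
  have apos: "a > 0" unfolding a_def by simp
  have a_le: "1/2 \<le> 2*a"
  proof -
    have "(2*a)^2 = 4 * a^2" by (simp add: power_mult_distrib)
    moreover have "(1/2::real)^2 = 1/4" by (simp add: power2_eq_square)
    ultimately have "(1/2)^2 \<le> (2*a)^2" using a3 by linarith
    thus ?thesis by (rule power2_le_imp_le) (use apos in auto)
  qed
  have s1: "-1/2 \<le> s" "s \<le> 1/2" using assms unfolding s_def by linarith+
  have u: "u = s + 1/2" unfolding s_def by simp
  have eq: "u^3 - 3/2*u^2 + 1/2*u = s^3 - s/4" unfolding u by (simp add: algebra_simps power3_eq_cube power2_eq_square)
  have c: "sqrt 3 / 36 = a/6" unfolding a_def by simp
  have r1: "(s + a)^2 * (2*a - s) = 0 - s^3 + 3 * a^2 * s + 2*a*a^2"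
    by (simp add: algebra_simps power3_eq_cube power2_eq_square)
  have r2: "(s - a)^2 * (s + 2*a) = s^3 - 3 * a^2 * s + 2*a*a^2"
    by (simp add: algebra_simps power3_eq_cube power2_eq_square)
  have "(s + a)^2 * (2*a - s) \<ge> 0" using s1 a_le by simp
  hence h1: "s^3 - s/4 \<le> a/6" unfolding r1 a3 by simp
  moreover have "(s - a)^2 * (s + 2*a) \<ge> 0" using s1 a_le by simp
  hence h2: "-(a/6) \<le> s^3 - s/4" unfolding r2 a3 by simp
  show ?thesis unfolding eq c abs_le_iff using h1 h2 by (intro conjI; linarith)
qed

lemma B3t_bound: "\<bar>B3t t\<bar> \<le> sqrt 3 / 36"
  unfolding B3t_def using B3_poly_bound[of "frac t"] frac_lt_1[of t] by simp

lemma cont_pfrac: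
  fixes p :: "real \<Rightarrow> real"
  assumes p: "continuous_on UNIV p" and p01: "p 0 = p 1"
  shows "isCont (\<lambda>t. p (frac t)) t"
proof -
  have seg: "continuous_on {of_int n .. of_int n + 1} (\<lambda>t. p (frac t))" for n :: int
  proof -
    have c: "continuous_on {of_int n .. of_int n + 1} (\<lambda>t. p (t - of_int n))"
      by (intro continuous_on_compose2[OF p]) (auto intro!: continuous_intros)
    show ?thesis
    proof (rule continuous_on_eq[OF c])
      fix t :: real assume that: "t \<in> {of_int n .. of_int n + 1}"
      show "p (t - of_int n) = p (frac t)"
      proof (cases "t = of_int n + 1")
        case True
        then have "frac t = 0" by (simp add: frac_def)
        then show ?thesis using True p01 by simp
      next
        case False
        then have "\<lfloor>t\<rfloor> = n" using that by (intro floor_unique) auto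
        then show ?thesis by (simp add: frac_def)
      qed
    qed
  qed
  define n where "n = \<lfloor>t\<rfloor>"
  have "continuous_on ({of_int (n-1) .. of_int (n-1) + 1} \<union> {of_int n .. of_int n + 1}) (\<lambda>t. p (frac t))"
    by (intro continuous_on_closed_Un seg closed_atLeastAtMost)
  moreover have "{of_int (n-1) .. of_int (n-1) + 1} \<union> {of_int n .. of_int n + 1} = {real_of_int n - 1 .. of_int n + 1}"
    by auto
  ultimately have "continuous_on {real_of_int n - 1 <..< of_int n + 1} (\<lambda>t. p (frac t))"
    by (metis continuous_on_subset greaterThanLessThan_subseteq_atLeastAtMost_iff order_refl)
  moreover have "t \<in> {real_of_int n - 1 <..< of_int n + 1}" 
    using of_int_floor_le[of t] real_of_int_floor_add_one_gt[of t] unfolding n_def by (simp; linarith)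
  ultimately show ?thesis by (meson continuous_on_eq_continuous_at open_greaterThanLessThan)
qed

lemma isCont_B2t: "isCont B2t t"
proof -
  have "isCont (\<lambda>t. (\<lambda>u. u^2 - u + 1/6) (frac t)) t"
    by (rule cont_pfrac) (auto intro!: continuous_intros)
  then show ?thesis unfolding B2t_def[abs_def] by simp
qed

lemma isCont_B3t: "isCont B3t t"
proof -
  have "isCont (\<lambda>t. (\<lambda>u. u^3 - 3/2 * u^2 + 1/2 * u) (frac t)) t"
    by (rule cont_pfrac) (auto intro!: continuous_intros)
  then show ?thesis unfolding B3t_def[abs_def] by simp
qed

lemma DERIV_frac: assumes "t \<notin> \<int>" shows "(frac has_real_derivative 1) (at t)"
proof -
  have "((\<lambda>s. s - real_of_int \<lfloor>s\<rfloor>) has_real_derivative 1 - 0) (at t)"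
    by (intro derivative_intros floor_has_real_derivative[where f=id, simplified]) (use assms in auto)
  then show ?thesis by (simp add: frac_def[abs_def])
qed

lemma DERIV_B2t: assumes "t \<notin> \<int>" shows "(B2t has_real_derivative (2 * frac t - 1)) (at t)"
proof -
  note d = DERIV_frac[OF assms]
  show ?thesis unfolding B2t_def[abs_def]
    by (rule DERIV_cong[OF DERIV_add[OF DERIV_diff[OF DERIV_power[OF d] d] DERIV_const]]) simp
qed

lemma DERIV_B3t: assumes "t \<notin> \<int>" shows "(B3t has_real_derivative (3 * B2t t)) (at t)"
proof -
  note d = DERIV_frac[OF assms]
  show ?thesis unfolding B3t_def[abs_def]
    by (rule DERIV_cong[OF DERIV_add[OF DERIV_diff[OF DERIV_power[OF d] DERIV_cmult[OF DERIV_power[OF d]]] DERIV_cmult[OF d]]])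
       (simp add: B2t_def algebra_simps power2_eq_square)
qed

lemma finite_E:
  fixes a b x :: real
  assumes "0 < a" "0 < x"
  shows "finite {z \<in> {a..b}. 1/(x*z) \<in> \<int>}"
proof -
  have "{z \<in> {a..b}. 1/(x*z) \<in> \<int>} \<subseteq> (\<lambda>k. 1/(x * of_int k)) ` {\<lfloor>1/(x*b)\<rfloor>..\<lceil>1/(x*a)\<rceil>}"
  proof
    fix z assume z: "z \<in> {z \<in> {a..b}. 1/(x*z) \<in> \<int>}"
    then obtain k where k: "1/(x*z) = of_int k" by (auto elim: Ints_cases)
    have zp: "z > 0" using z assms by auto
    have "1/(x*b) \<le> 1/(x*z)" using z zp assms by (intro divide_left_mono) (auto intro: mult_left_mono)
    hence k1: "\<lfloor>1/(x*b)\<rfloor> \<le> k" using k by linarith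
    have "1/(x*z) \<le> 1/(x*a)" using z zp assms by (intro divide_left_mono) (auto intro: mult_left_mono)
    hence k2: "k \<le> \<lceil>1/(x*a)\<rceil>" using k by linarith
    have kz: "x * z * of_int k = 1" using k zp assms by (simp add: field_simps)
    hence "of_int k \<noteq> (0::real)" by auto
    hence "z = 1/(x * of_int k)" using kz zp assms by (simp add: field_simps)
    then show "z \<in> (\<lambda>k. 1/(x * of_int k)) ` {\<lfloor>1/(x*b)\<rfloor>..\<lceil>1/(x*a)\<rceil>}" using k1 k2 by auto
  qed
  then show ?thesis by (rule finite_subset) auto
qed

lemma bdd_meas_integrable:
  fixes f :: "real \<Rightarrow> real"
  assumes "f \<in> borel_measurable borel" "\<And>z. z \<in> {a..b} \<Longrightarrow> \<bar>f z\<bar> \<le> C"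
  shows "f integrable_on {a..b}"
proof (rule measurable_bounded_by_integrable_imp_integrable_real[where g="\<lambda>_. C"])
  show "f \<in> borel_measurable (lebesgue_on {a..b})"
    using assms(1) by (simp add: measurable_completion measurable_restrict_space1)
  show "(\<lambda>_. C) integrable_on {a..b}" by (rule integrable_const_ivl)
qed (use assms in auto)

lemma DERIV_inv_xz:
  fixes x z :: real assumes "x > 0" "z > 0"
  shows "((\<lambda>z. 1/(x*z)) has_real_derivative (- 1/(x*z^2))) (at z)"
proof -
  have "((\<lambda>z. inverse x * inverse z) has_real_derivative (inverse x * (- (inverse z * inverse z)))) (at z)"
    by (intro DERIV_cmult DERIV_inverse[THEN DERIV_cong]) (use assms in \<open>auto simp: power2_eq_square\<close>)
  then show ?thesis using assms by (simp add: field_simps power2_eq_square)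
qed

lemma DERIV_B2_comp:
  fixes x z :: real assumes "x > 0" "z > 0" "1/(x*z) \<notin> \<int>"
  shows "((\<lambda>z. B2t (1/(x*z))) has_real_derivative ((2 * frac (1/(x*z)) - 1) * (- 1/(x*z^2)))) (at z)"
  by (rule DERIV_chain2[OF DERIV_B2t[OF assms(3)] DERIV_inv_xz[OF assms(1,2)]])

lemma DERIV_B3_comp:
  fixes x z :: real assumes "x > 0" "z > 0" "1/(x*z) \<notin> \<int>"
  shows "((\<lambda>z. B3t (1/(x*z))) has_real_derivative ((3 * B2t (1/(x*z))) * (- 1/(x*z^2)))) (at z)"
  by (rule DERIV_chain2[OF DERIV_B3t[OF assms(3)] DERIV_inv_xz[OF assms(1,2)]])

lemma cont_B2_comp:
  fixes x a b :: real assumes "x > 0" "a > 0"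
  shows "continuous_on {a..b} (\<lambda>z. B2t (1/(x*z)))"
proof -
  have "continuous_on {a..b} (\<lambda>z. 1/(x*z))" using assms by (intro continuous_intros) auto
  moreover have "continuous_on UNIV B2t" by (intro continuous_at_imp_continuous_on ballI isCont_B2t)
  ultimately show ?thesis using continuous_on_compose2[where t=UNIV] by blast
qed

lemma cont_B3_comp:
  fixes x a b :: real assumes "x > 0" "a > 0"
  shows "continuous_on {a..b} (\<lambda>z. B3t (1/(x*z)))"
proof -
  have "continuous_on {a..b} (\<lambda>z. 1/(x*z))" using assms by (intro continuous_intros) auto
  moreover have "continuous_on UNIV B3t" by (intro continuous_at_imp_continuous_on ballI isCont_B3t)
  ultimately show ?thesis using continuous_on_compose2[where t=UNIV] by blast
qed

definition FF :: "real \<Rightarrow> real \<Rightarrow> real \<Rightarrow> real \<Rightarrow> real" where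
  "FF x y m z = x/2 * B2t (1/(x*z)) * ((m + 1/2) * z^2 - z/y)"

definition gg :: "real \<Rightarrow> real \<Rightarrow> real \<Rightarrow> real" where
  "gg x y z = x/2 * B2t (1/(x*z)) * (2*z*B1 (1/(z*y)) + 1/y)"

lemma alg:
  fixes x y z f B m :: real assumes "x>0" "y>0" "z>0"
  shows "(1/2 - f)*(1/2 - (1/(z*y) - m)) + x/2*B*(2*z*(1/2 - (1/(z*y) - m)) + 1/y)
    = x/2*((2*f-1)*(-1/(x*z^2)))*((m+1/2)*z^2 - z/y) + x/2*B*((m+1/2)*(2*z) - 1/y)"
  using assms by (simp add: field_simps power2_eq_square)

lemma piece:
  fixes x y a b :: real and m :: int
  assumes "x > 0" "y > 0" "0 < a" "a \<le> b"
    and fl: "\<And>z. z \<in> {a<..<b} \<Longrightarrow> \<lfloor>1/(z*y)\<rfloor> = m"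
  shows "((\<lambda>z. K x z * K z y + gg x y z) has_integral (FF x y m b - FF x y m a)) {a..b}"
proof -
  define S where "S = {z \<in> {a..b}. 1/(x*z) \<in> \<int>}"
  have finS: "finite S" unfolding S_def using finite_E assms by blast
  define F' where "F' z = x/2 * ((2 * frac (1/(x*z)) - 1) * (- 1/(x*z^2))) * ((m + 1/2) * z^2 - z/y)
      + x/2 * B2t (1/(x*z)) * ((m + 1/2) * (2*z) - 1/y)" for z
  have ftc: "(F' has_integral (FF x y m b - FF x y m a)) {a..b}"
  proof (rule fundamental_theorem_of_calculus_interior_strong[OF finS \<open>a \<le> b\<close>])
    fix z assume z: "z \<in> {a<..<b} - S"
    then have zp: "z > 0" "1/(x*z) \<notin> \<int>" using assms unfolding S_def by auto
    have "((\<lambda>z. x/2 * B2t (1/(x*z)) * ((m + 1/2) * z^2 - z/y)) has_real_derivative F' z) (at z)"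
      unfolding F'_def
      by (rule DERIV_cong[OF DERIV_mult[OF DERIV_cmult[OF DERIV_B2_comp[OF \<open>x>0\<close> zp]]]])
         (use assms in \<open>auto intro!: derivative_eq_intros simp: field_simps\<close>)
    then show "(FF x y m has_vector_derivative F' z) (at z)"
      unfolding FF_def[abs_def] has_real_derivative_iff_has_vector_derivative .
  next
    show "continuous_on {a..b} (FF x y m)" unfolding FF_def[abs_def]
      by (intro continuous_on_mult continuous_on_const cont_B2_comp[OF \<open>x>0\<close> \<open>a>0\<close>] 
          continuous_on_diff continuous_on_power continuous_on_id continuous_on_divide) (use assms in auto)
  qed
  show ?thesis
  proof (rule has_integral_spike_finite[OF _ _ ftc])
    show "finite (S \<union> {a,b})" using finS by simp
    fix z assume z: "z \<in> {a..b} - (S \<union> {a,b})"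
    then have zp: "z > 0" and zab: "z \<in> {a<..<b}" using assms by auto
    have fr: "frac (1/(z*y)) = 1/(z*y) - m" using fl[OF zab] by (simp add: frac_def)
    have xz: "x * z \<noteq> 0" "z * y \<noteq> 0" using zp assms by auto
    show "K x z * K z y + gg x y z = F' z"
      unfolding K_def gg_def F'_def B1_def fr using xz 
      by (simp only: if_False alg[OF \<open>x>0\<close> \<open>y>0\<close> zp(1)])
  qed
qed

definition zz :: "real \<Rightarrow> nat \<Rightarrow> real" where "zz y m = 1/(real m * y)"
definition m0 :: "real \<Rightarrow> nat" where "m0 y = nat \<lfloor>1/y\<rfloor> + 1"
definition W :: "real \<Rightarrow> real \<Rightarrow> nat \<Rightarrow> real" where "W x y m = x/2 * B2t (1/(x * zz y m)) * (zz y m)^2"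
definition phi :: "real \<Rightarrow> real \<Rightarrow> real \<Rightarrow> real" where "phi x y z = K x z * K z y + gg x y z"
definition C0 :: "real \<Rightarrow> real \<Rightarrow> real" where "C0 x y = x/2 * B2t (1/x) * B1 (1/y)"

lemma int_bound:
  fixes f :: "real \<Rightarrow> real"
  assumes "f integrable_on {a..b}" "a \<le> b" "\<And>z. z \<in> {a..b} \<Longrightarrow> \<bar>f z\<bar> \<le> B"
  shows "\<bar>integral {a..b} f\<bar> \<le> B * (b - a)"
proof -
  have "0 \<le> B" using assms(3)[of a] assms(2) by force
  then have "norm (integral (cbox a b) f) \<le> B * Henstock_Kurzweil_Integration.content (cbox a b)"
    using assms by (intro has_integral_bound[OF _ integrable_integral]) auto
  then show ?thesis using assms(2) by simp
qed

lemma zalg: "(c::real) > 0 \<Longrightarrow> y > 0 \<Longrightarrow> r * (1/(c*y))^2 - (1/(c*y))/y = (r - c) * (1/(c*y))^2"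
  by (simp add: field_simps power2_eq_square)

context
  fixes x y :: real
  assumes xy: "0 < x" "x \<le> 1" "0 < y" "y \<le> 1"
begin

lemma m0_props: "1/y < real (m0 y)" "real (m0 y) \<le> 1/y + 1" "m0 y \<ge> 1"
  "real (m0 y) = of_int \<lfloor>1/y\<rfloor> + 1"
proof -
  have "1/y \<ge> 1" using xy by simp
  then have f1: "\<lfloor>1/y\<rfloor> \<ge> 1" by linarith
  have f0: "0 \<le> \<lfloor>1/y\<rfloor>" using f1 by linarith
  show e: "real (m0 y) = of_int \<lfloor>1/y\<rfloor> + 1" unfolding m0_def using of_nat_nat[OF f0] by simp
  show "1/y < real (m0 y)" unfolding e by linarith
  show "real (m0 y) \<le> 1/y + 1" unfolding e by linarith
  show "m0 y \<ge> 1" unfolding m0_def by simp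
qed

lemma zz_pos: "m \<ge> 1 \<Longrightarrow> zz y m > 0"
  unfolding zz_def using xy by simp

lemma zz_mono: "m \<ge> 1 \<Longrightarrow> m \<le> n \<Longrightarrow> zz y n \<le> zz y m"
  unfolding zz_def using xy by (intro divide_left_mono mult_right_mono) auto

lemma zz_m0: "zz y (m0 y) < 1"
  using m0_props(1) xy unfolding zz_def by (simp add: field_simps)

lemma piece_m:
  assumes m: "m \<ge> m0 y"
  shows "(phi x y has_integral (W x y m / 2 + W x y (Suc m) / 2)) {zz y (Suc m)..zz y m}"
proof -
  have m1: "m \<ge> 1" using m m0_props(3) by linarith
  have mp: "real m > 0" using m1 by simp
  have a: "0 < zz y (Suc m)" by (rule zz_pos) simp
  have ab: "zz y (Suc m) \<le> zz y m" by (rule zz_mono) (use m1 in auto)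
  have fl: "\<lfloor>1/(z*y)\<rfloor> = int m" if z: "z \<in> {zz y (Suc m)<..<zz y m}" for z
  proof -
    have zp: "z > 0" using z a by auto
    have "z * (real m * y) < 1" using z mp xy unfolding zz_def by (simp add: field_simps)
    then have l: "real m < 1/(z*y)" using zp xy by (simp add: field_simps)
    have "1/((real m + 1) * y) < z" using z unfolding zz_def by (simp add: add.commute)
    moreover have "(real m + 1) * y > 0" using mp xy by simp
    ultimately have "1 < z * ((real m + 1) * y)" by (simp add: pos_divide_less_eq)
    then have u: "1/(z*y) < real m + 1" using zp xy by (simp add: field_simps)
    show ?thesis using l u by (simp add: floor_eq_iff)
  qed
  have P: "((\<lambda>z. K x z * K z y + gg x y z) has_integral (FF x y (of_int (int m)) (zz y m) - FF x y (of_int (int m)) (zz y (Suc m)))) {zz y (Suc m)..zz y m}"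
    by (rule piece) (use xy a ab fl in auto)
  have "FF x y (real m) (zz y m) = x/2 * B2t(1/(x*zz y m)) * ((real m + 1/2 - real m) * (zz y m)^2)"
    unfolding FF_def zz_def using zalg[of "real m" y "real m + 1/2"] xy mp by simp
  then have e1: "FF x y (real m) (zz y m) = W x y m / 2" unfolding W_def by simp
  have "FF x y (real m) (zz y (Suc m)) = x/2 * B2t(1/(x*zz y (Suc m))) * ((real m + 1/2 - real (Suc m)) * (zz y (Suc m))^2)"
    unfolding FF_def zz_def using zalg[of "real (Suc m)" y "real m + 1/2"] xy by simp
  then have e2: "FF x y (real m) (zz y (Suc m)) = - W x y (Suc m) / 2" unfolding W_def by simp
  show ?thesis using P unfolding phi_def[abs_def] by (simp add: e1 e2)
qed

lemma piece_0:
  "(phi x y has_integral (C0 x y + W x y (m0 y) / 2)) {zz y (m0 y)..1}"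
proof -
  define M where "M = m0 y"
  have mp: "real M > 0" using m0_props(3) unfolding M_def by simp
  have a: "0 < zz y M" unfolding M_def by (rule zz_pos) (use m0_props(3) in auto)
  have ab: "zz y M \<le> 1" using zz_m0 unfolding M_def by simp
  have fl: "\<lfloor>1/(z*y)\<rfloor> = \<lfloor>1/y\<rfloor>" if z: "z \<in> {zz y M<..<1}" for z
  proof -
    have zp: "z > 0" using z a by auto
    have "z * (real M * y) > 1" using z mp xy unfolding zz_def by (simp add: field_simps)
    then have u: "1/(z*y) < real M" using zp xy by (simp add: field_simps)
    have "1/y \<le> 1/(z*y)" using z zp xy by (simp add: field_simps)
    then show ?thesis using u m0_props(4) unfolding M_def[symmetric] by (simp add: floor_eq_iff) linarith
  qed
  have P: "((\<lambda>z. K x z * K z y + gg x y z) has_integral (FF x y (of_int \<lfloor>1/y\<rfloor>) 1 - FF x y (of_int \<lfloor>1/y\<rfloor>) (zz y M))) {zz y M..1}"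
    by (rule piece) (use xy a ab fl in auto)
  have e1: "FF x y (of_int \<lfloor>1/y\<rfloor>) 1 = C0 x y"
    unfolding FF_def C0_def B1_def frac_def by (simp add: algebra_simps)
  have "FF x y (of_int \<lfloor>1/y\<rfloor>) (zz y M) = x/2 * B2t(1/(x*zz y M)) * ((of_int \<lfloor>1/y\<rfloor> + 1/2 - real M) * (zz y M)^2)"
    unfolding FF_def zz_def using zalg[of "real M" y "of_int \<lfloor>1/y\<rfloor> + 1/2"] xy mp by simp
  then have e2: "FF x y (of_int \<lfloor>1/y\<rfloor>) (zz y M) = - W x y M / 2"
    using m0_props(4) unfolding M_def[symmetric] W_def by simp
  have "(phi x y has_integral (C0 x y + W x y M / 2)) {zz y M..1}" using P unfolding phi_def[abs_def] by (simp add: e1 e2)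
  then show ?thesis unfolding M_def .
qed

lemma tele:
  "(phi x y has_integral (C0 x y + (\<Sum>m\<in>{m0 y..m0 y + n}. W x y m) - W x y (m0 y + n) / 2)) {zz y (m0 y + n)..1}"
proof (induction n)
  case 0
  then show ?case using piece_0 by (simp add: algebra_simps)
next
  case (Suc n)
  have pm: "(phi x y has_integral (W x y (m0 y + n) / 2 + W x y (Suc (m0 y + n)) / 2)) {zz y (Suc (m0 y + n))..zz y (m0 y + n)}"
    by (rule piece_m) simp
  have le1: "zz y (m0 y + n) \<le> 1" using zz_mono[of "m0 y" "m0 y + n"] zz_m0 m0_props(3) by simp
  have le2: "zz y (Suc (m0 y + n)) \<le> zz y (m0 y + n)" using zz_mono[of "m0 y + n" "Suc (m0 y + n)"] m0_props(3) by simp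
  have "(phi x y has_integral ((W x y (m0 y + n) / 2 + W x y (Suc (m0 y + n)) / 2) +
      (C0 x y + (\<Sum>m\<in>{m0 y..m0 y + n}. W x y m) - W x y (m0 y + n) / 2))) {zz y (Suc (m0 y + n))..1}"
    by (rule has_integral_combine[OF le2 le1 pm Suc.IH])
  moreover have "{m0 y..m0 y + Suc n} = insert (Suc (m0 y + n)) {m0 y..m0 y + n}" by auto
  ultimately show ?case by (simp add: algebra_simps)
qed

end

lemma K_bound: "\<bar>K a b\<bar> \<le> 1/2"
  unfolding K_def using B1_bound[of "1/(a*b)"] unfolding B1_def by auto

lemma meas_f: "(\<lambda>z. K x z * K z y) \<in> borel_measurable borel"
  unfolding K_def frac_def by measurable

lemma meas_gg: "gg x y \<in> borel_measurable borel"
  unfolding gg_def[abs_def] B1_def B2t_def frac_def by measurable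

lemma meas_phi: "phi x y \<in> borel_measurable borel"
  unfolding phi_def[abs_def] using meas_f meas_gg by measurable

definition cc :: "real \<Rightarrow> real \<Rightarrow> nat \<Rightarrow> real" where "cc x y m = B2t (real m * y / x) / (real m)^2"

context
  fixes x y :: real
  assumes xy: "0 < x" "x \<le> 1" "0 < y" "y \<le> 1"
begin

lemma gg_bound: "z \<in> {0..1} \<Longrightarrow> \<bar>gg x y z\<bar> \<le> 1/12 + 1/12 * (1/y)"
proof -
  assume z: "z \<in> {0..1}"
  have "\<bar>2*z*B1 (1/(z*y)) + 1/y\<bar> \<le> \<bar>2*z*B1 (1/(z*y))\<bar> + \<bar>1/y\<bar>" by (rule abs_triangle_ineq)
  also have "\<bar>2*z*B1 (1/(z*y))\<bar> \<le> 2*1*(1/2)" unfolding abs_mult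
    using B1_bound[of "1/(z*y)"] z by (intro mult_mono) auto
  finally have h: "\<bar>2*z*B1 (1/(z*y)) + 1/y\<bar> \<le> 1 + 1/y" using xy by simp
  have "\<bar>gg x y z\<bar> = x/2 * \<bar>B2t (1/(x*z))\<bar> * \<bar>2*z*B1 (1/(z*y)) + 1/y\<bar>"
    unfolding gg_def abs_mult using xy by simp
  also have "\<dots> \<le> 1/2 * (1/6) * (1 + 1/y)"
    using xy B2t_bound[of "1/(x*z)"] h by (intro mult_mono) auto
  finally show ?thesis by (simp add: algebra_simps)
qed

lemma phi_bound: "z \<in> {0..1} \<Longrightarrow> \<bar>phi x y z\<bar> \<le> 1 + 1/y"
proof -
  assume z: "z \<in> {0..1}"
  have "\<bar>K x z * K z y\<bar> \<le> 1/2 * (1/2)" unfolding abs_mult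
    using K_bound[of x z] K_bound[of z y] by (intro mult_mono) auto
  then have "\<bar>K x z * K z y\<bar> \<le> 1/4" by simp
  moreover have "1/y > 0" using xy by simp
  ultimately show ?thesis unfolding phi_def
    using gg_bound[OF z] abs_triangle_ineq[of "K x z * K z y" "gg x y z"] by linarith
qed

lemma phi_int: "0 \<le> a \<Longrightarrow> b \<le> 1 \<Longrightarrow> phi x y integrable_on {a..b}"
  by (rule bdd_meas_integrable[OF meas_phi, where C="1 + 1/y"]) (use phi_bound in auto)

lemma zz_lim: "(\<lambda>n. zz y (m0 y + n)) \<longlonglongrightarrow> 0"
proof -
  have "(\<lambda>n. inverse (real (n + m0 y))) \<longlonglongrightarrow> 0"
    using LIMSEQ_ignore_initial_segment[OF lim_inverse_n', of "m0 y"] by (simp add: inverse_eq_divide)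
  then have "(\<lambda>n. inverse (real (n + m0 y)) * (1/y)) \<longlonglongrightarrow> 0 * (1/y)"
    by (intro tendsto_mult tendsto_const)
  moreover have "zz y (m0 y + n) = inverse (real (n + m0 y)) * (1/y)" for n
    unfolding zz_def by (simp add: field_simps add.commute)
  ultimately show ?thesis by simp
qed

lemma int_lim: "(\<lambda>n. integral {zz y (m0 y + n)..1} (phi x y)) \<longlonglongrightarrow> integral {0..1} (phi x y)"
proof -
  have zpos: "0 < zz y (m0 y + n)" for n by (rule zz_pos[OF xy]) (use m0_props(3)[OF xy] in auto)
  have zle: "zz y (m0 y + n) \<le> 1" for n 
    using zz_mono[OF xy, of "m0 y" "m0 y + n"] zz_m0[OF xy] m0_props(3)[OF xy] by simp
  have eq: "integral {0..1} (phi x y) - integral {zz y (m0 y + n)..1} (phi x y) = integral {0..zz y (m0 y + n)} (phi x y)" for n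
    using Henstock_Kurzweil_Integration.integral_combine[OF less_imp_le[OF zpos[of n]] zle[of n] phi_int[OF order_refl order_refl]] by linarith
  have bnd: "norm (integral {0..zz y (m0 y + n)} (phi x y)) \<le> (1 + 1/y) * zz y (m0 y + n)" for n
  proof -
    have "\<bar>phi x y z\<bar> \<le> 1 + 1/y" if "z \<in> {0..zz y (m0 y + n)}" for z
      using phi_bound zle[of n] that by auto
    then show ?thesis
      using int_bound[OF phi_int[OF order_refl zle[of n]] less_imp_le[OF zpos[of n]], where B="1 + 1/y"] by simp
  qed
  have A: "(\<lambda>n. (1 + 1/y) * zz y (m0 y + n)) \<longlonglongrightarrow> 0"
    using tendsto_mult_left[OF zz_lim, of "1 + 1/y"] by simp
  have B: "\<forall>n. norm (integral {0..zz y (m0 y + n)} (phi x y)) \<le> (1 + 1/y) * zz y (m0 y + n)"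
    using bnd by blast
  have "(\<lambda>n. integral {0..zz y (m0 y + n)} (phi x y)) \<longlonglongrightarrow> 0"
    by (rule Lim_null_comparison[OF always_eventually[OF B] A])
  then have C: "(\<lambda>n. integral {0..1} (phi x y) - integral {zz y (m0 y + n)..1} (phi x y)) \<longlonglongrightarrow> 0"
    by (simp add: eq)
  show ?thesis using tendsto_diff[OF tendsto_const C, of "integral {0..1} (phi x y)"] by simp
qed

lemma set_eq: "{m::nat. 1/y < real m} = {m0 y..}"
proof -
  have "1/y < real m \<longleftrightarrow> m0 y \<le> m" for m
  proof
    assume a: "1/y < real m"
    have "\<lfloor>1/y\<rfloor> < int m" using a by (simp add: floor_less_iff)
    then have "\<lfloor>1/y\<rfloor> + 1 \<le> int m" by linarith
    then have "real_of_int (\<lfloor>1/y\<rfloor> + 1) \<le> real_of_int (int m)" by (simp only: of_int_le_iff)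
    then have "real m \<ge> of_int \<lfloor>1/y\<rfloor> + 1" by simp
    then show "m0 y \<le> m" using m0_props(4)[OF xy] by linarith
  next
    assume "m0 y \<le> m" then show "1/y < real m" using m0_props(1)[OF xy] by linarith
  qed
  then show ?thesis by auto
qed

lemma series_lim:
  "(\<lambda>n. \<Sum>m\<in>{m0 y..m0 y + n}. cc x y m) \<longlonglongrightarrow> infsum (cc x y) {m. 1/y < real m}"
proof -
  define d where "d m = (if m \<in> {m0 y..} then cc x y m else 0)" for m
  have dbound: "norm (d m) \<le> inverse (real m ^ 2)" for m
  proof (cases "m \<in> {m0 y..}")
    case True
    then have "m \<ge> 1" using m0_props(3)[OF xy] by auto
    then have "\<bar>B2t (real m * y / x) / (real m)^2\<bar> \<le> 1 / (real m)^2"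
      using B2t_bound[of "real m * y / x"] by (simp add: abs_div divide_right_mono)
    then show ?thesis using True unfolding d_def cc_def by (simp add: divide_inverse)
  next
    case False then show ?thesis unfolding d_def by simp
  qed
  have ns: "summable (\<lambda>m. norm (d m))"
    by (rule summable_comparison_test[OF _ inverse_power_summable[of 2]]) (use dbound in auto)
  have "(d has_sum infsum d UNIV) UNIV"
    using norm_summable_imp_summable_on[OF ns] by (rule has_sum_infsum)
  then have sm: "d sums infsum d UNIV" by (rule has_sum_imp_sums)
  have "infsum d UNIV = infsum (cc x y) {m0 y..}"
    by (rule infsum_cong_neutral) (auto simp: d_def)
  then have sm2: "d sums infsum (cc x y) {m. 1/y < real m}" using sm set_eq by simp
  have "(\<lambda>n. sum d {..<n + (m0 y + 1)}) \<longlonglongrightarrow> infsum (cc x y) {m. 1/y < real m}"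
    using LIMSEQ_ignore_initial_segment[OF sm2[unfolded sums_def], of "m0 y + 1"] .
  moreover have "sum d {..<n + (m0 y + 1)} = (\<Sum>m\<in>{m0 y..m0 y + n}. cc x y m)" for n
  proof -
    have "sum d {..<n + (m0 y + 1)} = sum (cc x y) ({..<n + (m0 y + 1)} \<inter> {m0 y..})"
      unfolding d_def by (rule sum.inter_restrict[symmetric]) simp
    also have "{..<n + (m0 y + 1)} \<inter> {m0 y..} = {m0 y..m0 y + n}" by auto
    finally show ?thesis .
  qed
  ultimately show ?thesis by simp
qed

lemma W_cc: "m \<ge> 1 \<Longrightarrow> W x y m = x / (2 * y^2) * cc x y m"
  unfolding W_def zz_def cc_def using xy by (simp add: field_simps power2_eq_square)

lemma W_lim: "(\<lambda>n. W x y (m0 y + n)) \<longlonglongrightarrow> 0"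
proof -
  have b: "norm (W x y (m0 y + n)) \<le> 1 * (zz y (m0 y + n))^2" for n
  proof -
    have "\<bar>W x y (m0 y + n)\<bar> = x/2 * \<bar>B2t (1/(x * zz y (m0 y + n)))\<bar> * (zz y (m0 y + n))^2"
      unfolding W_def abs_mult using xy by simp
    also have "\<dots> \<le> 1 * (zz y (m0 y + n))^2"
    proof (rule mult_right_mono)
      have "\<bar>B2t (1/(x * zz y (m0 y + n)))\<bar> \<le> 1" using B2t_bound[of "1/(x * zz y (m0 y + n))"] by linarith
      then show "x/2 * \<bar>B2t (1/(x * zz y (m0 y + n)))\<bar> \<le> 1" using xy by (intro mult_le_one) auto
    qed simp
    finally show ?thesis by simp
  qed
  have A: "(\<lambda>n. 1 * (zz y (m0 y + n))^2) \<longlonglongrightarrow> 0"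
    using tendsto_mult_left[OF tendsto_power[OF zz_lim], of 1 2] by simp
  have B: "\<forall>n. norm (W x y (m0 y + n)) \<le> 1 * (zz y (m0 y + n))^2" using b by blast
  show ?thesis by (rule Lim_null_comparison[OF always_eventually[OF B] A])
qed

lemma main_identity:
  "integral {0..1} (phi x y) = C0 x y + x / (2 * y^2) * infsum (cc x y) {m. 1/y < real m}"
proof -
  define T where "T n = C0 x y + (\<Sum>m\<in>{m0 y..m0 y + n}. W x y m) - W x y (m0 y + n) / 2" for n
  have "integral {zz y (m0 y + n)..1} (phi x y) = T n" for n
    unfolding T_def using tele[OF xy] by (rule integral_unique)
  then have l1: "T \<longlonglongrightarrow> integral {0..1} (phi x y)" using int_lim by simp
  have sw: "(\<Sum>m\<in>{m0 y..m0 y + n}. W x y m) = x / (2 * y^2) * (\<Sum>m\<in>{m0 y..m0 y + n}. cc x y m)" for n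
    unfolding sum_distrib_left using W_cc m0_props(3)[OF xy] by (intro sum.cong) auto
  have "T \<longlonglongrightarrow> C0 x y + x / (2 * y^2) * infsum (cc x y) {m. 1/y < real m} - 0 / 2"
    unfolding T_def sw
    by (rule tendsto_diff[OF tendsto_add[OF tendsto_const tendsto_mult_left[OF series_lim]] tendsto_divide[OF W_lim tendsto_const]]) simp
  then show ?thesis using LIMSEQ_unique[OF l1] by simp
qed

end

lemma lin_int:
  fixes a b c :: real assumes "a \<le> b"
  shows "((\<lambda>z. c * z) has_integral (c * (b^2 - a^2) / 2)) {a..b}"
proof -
  have "((\<lambda>z. c * z) has_integral (c * b^2 / 2 - c * a^2 / 2)) {a..b}"
  proof (rule fundamental_theorem_of_calculus[OF assms, where f="\<lambda>z. c * z^2 / 2"])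
    fix z assume "z \<in> {a..b}"
    have "((\<lambda>z. c * z^2 / 2) has_real_derivative c * z) (at z within {a..b})"
      by (auto intro!: derivative_eq_intros)
    then show "((\<lambda>z. c * z^2 / 2) has_vector_derivative c * z) (at z within {a..b})"
      by (simp add: has_real_derivative_iff_has_vector_derivative)
  qed
  then show ?thesis by (simp add: algebra_simps diff_divide_distrib)
qed

lemma meas_b: "(\<lambda>z. B2t (1/(x*z))) \<in> borel_measurable borel"
  unfolding B2t_def frac_def by measurable

lemma meas_h: "(\<lambda>z. c * z * B3t (1/(x*z))) \<in> borel_measurable borel"
  unfolding B3t_def frac_def by measurable

lemma meas_g1: "(\<lambda>z. x * z * B2t (1/(x*z)) * B1 (1/(z*y))) \<in> borel_measurable borel"
  unfolding B2t_def B1_def frac_def by measurable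

lemma b_int: "(\<lambda>z. B2t (1/(x*z))) integrable_on {a..b}"
  by (rule bdd_meas_integrable[OF meas_b, where C="1/6"]) (use B2t_bound in auto)

lemma b_ftc:
  fixes x e :: real
  assumes "0 < x" "0 < e" "e \<le> 1"
  shows "((\<lambda>z. B2t (1/(x*z)) - 2*x/3 * z * B3t (1/(x*z))) has_integral
      ((- x/3 * B3t (1/(x*1)) * 1^2) - (- x/3 * B3t (1/(x*e)) * e^2))) {e..1}"
proof (rule fundamental_theorem_of_calculus_interior_strong[OF finite_E[OF \<open>0<e\<close> \<open>0<x\<close>, of 1] \<open>e \<le> 1\<close>,
      where f="\<lambda>z. - x/3 * B3t (1/(x*z)) * z^2"])
  fix z assume z: "z \<in> {e<..<1} - {z \<in> {e..1}. 1/(x*z) \<in> \<int>}"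
  then have zp: "z > 0" "1/(x*z) \<notin> \<int>" using assms by auto
  have "((\<lambda>z. - x/3 * B3t (1/(x*z)) * z^2) has_real_derivative
      (B2t (1/(x*z)) - 2*x/3 * z * B3t (1/(x*z)))) (at z)"
    by (rule DERIV_cong[OF DERIV_mult[OF DERIV_cmult[OF DERIV_B3_comp[OF \<open>x>0\<close> zp]] DERIV_power[OF DERIV_ident]]])
       (use zp assms in \<open>simp add: field_simps power2_eq_square\<close>)
  then show "((\<lambda>z. - x/3 * B3t (1/(x*z)) * z^2) has_vector_derivative
      (B2t (1/(x*z)) - 2*x/3 * z * B3t (1/(x*z)))) (at z)"
    by (simp add: has_real_derivative_iff_has_vector_derivative)
next
  show "continuous_on {e..1} (\<lambda>z. - x/3 * B3t (1/(x*z)) * z^2)"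
    by (intro continuous_on_mult continuous_on_const cont_B3_comp[OF \<open>x>0\<close> \<open>0<e\<close>] continuous_on_power continuous_on_id)
qed

lemma b_bound_e:
  fixes x e :: real
  assumes "0 < x" "0 < e" "e \<le> 1"
  shows "\<bar>integral {e..1} (\<lambda>z. B2t (1/(x*z)))\<bar> \<le> x * sqrt 3 / 54"
proof -
  define M where "M = sqrt 3 / 36"
  define h where "h z = 2*x/3 * z * B3t (1/(x*z))" for z
  have hint: "h integrable_on {e..1}" unfolding h_def
  proof (rule bdd_meas_integrable[OF meas_h, where C="2*x/3 * 1 * M"])
    fix z assume z: "z \<in> {e..1}"
    have "\<bar>2*x/3 * z * B3t (1/(x*z))\<bar> = 2*x/3 * z * \<bar>B3t (1/(x*z))\<bar>" using z assms by (simp add: abs_mult)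
    also have "\<dots> \<le> 2*x/3 * 1 * M" unfolding M_def
      using B3t_bound z assms by (intro mult_mono) auto
    finally show "\<bar>2*x/3 * z * B3t (1/(x*z))\<bar> \<le> 2*x/3 * 1 * M" .
  qed
  have I: "integral {e..1} (\<lambda>z. B2t (1/(x*z)) - h z) = (- x/3 * B3t (1/(x*1)) * 1^2) - (- x/3 * B3t (1/(x*e)) * e^2)"
    unfolding h_def using b_ftc[OF assms] by (rule integral_unique)
  have I2: "integral {e..1} (\<lambda>z. B2t (1/(x*z))) = (- x/3 * B3t (1/(x*1)) * 1^2) - (- x/3 * B3t (1/(x*e)) * e^2) + integral {e..1} h"
    using I integral_diff[OF b_int hint] by simp
  have hb: "\<bar>integral {e..1} h\<bar> \<le> integral {e..1} (\<lambda>z. (2*x/3*M) * z)"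
  proof -
    have "norm (integral {e..1} h) \<le> integral {e..1} (\<lambda>z. (2*x/3*M) * z)"
    proof (rule integral_norm_bound_integral[OF hint])
      show "(\<lambda>z. (2*x/3*M) * z) integrable_on {e..1}" using lin_int[OF assms(3)] by blast
      fix z assume z: "z \<in> {e..1}"
      then have "\<bar>h z\<bar> = 2*x/3 * z * \<bar>B3t (1/(x*z))\<bar>" unfolding h_def abs_mult using assms by simp
      also have "\<dots> \<le> 2*x/3 * z * M" unfolding M_def using B3t_bound z assms by (intro mult_left_mono) auto
      finally show "norm (h z) \<le> (2*x/3*M) * z" by (simp add: algebra_simps)
    qed
    then show ?thesis by simp
  qed
  have li: "integral {e..1} (\<lambda>z. (2*x/3*M) * z) = (2*x/3*M) * (1^2 - e^2) / 2"
    using lin_int[OF assms(3)] by (rule integral_unique)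
  have t1: "\<bar>- x/3 * B3t (1/(x*1)) * 1^2\<bar> \<le> x/3 * M" 
  proof -
    have "\<bar>B3t (1/(x*1))\<bar> \<le> M" unfolding M_def by (rule B3t_bound)
    then have "x/3 * \<bar>B3t (1/(x*1))\<bar> \<le> x/3 * M" using assms by (intro mult_left_mono) auto
    then show ?thesis using assms by (simp add: abs_mult)
  qed
  have t2: "\<bar>- x/3 * B3t (1/(x*e)) * e^2\<bar> \<le> x/3 * M * e^2"
  proof -
    have "\<bar>B3t (1/(x*e))\<bar> \<le> M" unfolding M_def by (rule B3t_bound)
    then have "x/3 * \<bar>B3t (1/(x*e))\<bar> * e^2 \<le> x/3 * M * e^2" using assms by (intro mult_right_mono mult_left_mono) auto
    then show ?thesis using assms by (simp add: abs_mult)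
  qed
  have "\<bar>integral {e..1} (\<lambda>z. B2t (1/(x*z)))\<bar> \<le> x/3 * M + x/3 * M * e^2 + (2*x/3*M) * (1^2 - e^2) / 2"
    unfolding I2 using t1 t2 hb li by linarith
  also have "\<dots> = x * sqrt 3 / 54" unfolding M_def by (simp add: field_simps)
  finally show ?thesis .
qed

lemma b_bound:
  fixes x :: real
  assumes "0 < x"
  shows "\<bar>integral {0..1} (\<lambda>z. B2t (1/(x*z)))\<bar> \<le> x * sqrt 3 / 54"
proof (rule field_le_epsilon)
  fix d :: real assume d: "0 < d"
  define e where "e = min 1 d"
  have e: "0 < e" "e \<le> 1" "e \<le> d" unfolding e_def using d by auto
  have split: "integral {0..e} (\<lambda>z. B2t (1/(x*z))) + integral {e..1} (\<lambda>z. B2t (1/(x*z))) = integral {0..1} (\<lambda>z. B2t (1/(x*z)))"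
    using Henstock_Kurzweil_Integration.integral_combine[OF less_imp_le[OF e(1)] e(2) b_int] .
  have "\<bar>integral {0..e} (\<lambda>z. B2t (1/(x*z)))\<bar> \<le> 1/6 * (e - 0)"
    by (rule int_bound[OF b_int]) (use e B2t_bound in auto)
  then have "\<bar>integral {0..e} (\<lambda>z. B2t (1/(x*z)))\<bar> \<le> e / 6" by simp
  then have "\<bar>integral {0..e} (\<lambda>z. B2t (1/(x*z)))\<bar> \<le> d" using e by linarith
  then show "\<bar>integral {0..1} (\<lambda>z. B2t (1/(x*z)))\<bar> \<le> x * sqrt 3 / 54 + d"
    using b_bound_e[OF assms e(1,2)] split by linarith
qed

lemma K_sym: "K a b = K b a" by (simp add: K_def mult.commute)

lemma K2_sym: "K2 x y = K2 y x"
  unfolding K2_def by (simp add: K_sym mult.commute)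

lemma tl1: "(k::real) > 0 \<Longrightarrow> 1/(k+1)^2 \<le> 1/k - 1/(k+1)"
proof -
  assume k: "k > 0"
  have e: "1/k - 1/(k+1) = 1/(k*(k+1))" using k by (simp add: field_simps)
  have "k*(k+1) \<le> (k+1)^2" using k by (simp add: power2_eq_square algebra_simps)
  then have "1/(k+1)^2 \<le> 1/(k*(k+1))" using k by (intro divide_left_mono) auto
  then show ?thesis using e by simp
qed

lemma tl2: "(k::real) > 0 \<Longrightarrow> 1/k - 1/(k+1) \<le> 1/k^2"
proof -
  assume k: "k > 0"
  have e: "1/k - 1/(k+1) = 1/(k*(k+1))" using k by (simp add: field_simps)
  have "k^2 \<le> k*(k+1)" using k by (simp add: power2_eq_square algebra_simps)
  then have "1/(k*(k+1)) \<le> 1/k^2" using k by (intro divide_left_mono) auto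
  then show ?thesis using e by simp
qed

lemma tel_up: "a \<ge> 1 \<Longrightarrow> (\<Sum>m\<in>{a..a+n}. 1/(real m)^2) \<le> 1/(real a)^2 + 1/real a - 1/real (a+n)"
proof (induction n)
  case 0 then show ?case by simp
next
  case (Suc n)
  have s: "{a..a + Suc n} = insert (Suc (a+n)) {a..a+n}" by auto
  have pos: "real (a+n) > 0" using Suc by simp
  have "1/(real (Suc (a+n)))^2 \<le> 1/real (a+n) - 1/real (a + Suc n)"
    using tl1[OF pos] by (simp add: add.commute)
  then show ?case unfolding s using Suc by simp
qed

lemma tel_lo: "a \<ge> 1 \<Longrightarrow> (\<Sum>m\<in>{a..a+n}. 1/(real m)^2) \<ge> 1/real a - 1/real (a+n+1)"
proof (induction n)
  case 0
  have "1/real a - 1/real (a+1) \<le> 1/(real a)^2" using tl2[of "real a"] 0 by (simp add: add.commute)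
  then show ?case by simp
next
  case (Suc n)
  have s: "{a..a + Suc n} = insert (Suc (a+n)) {a..a+n}" by auto
  have pos: "real (a+n) > 0" using Suc by simp
  have "1/real (a+n+1) - 1/real (a + Suc n + 1) \<le> 1/(real (Suc (a+n)))^2"
    using tl2[of "real (a+n+1)"] pos by (simp add: add.commute add.left_commute)
  then show ?case unfolding s using Suc by simp
qed

lemma g1_int: "(\<lambda>z. x * z * B2t (1/(x*z)) * B1 (1/(z*y))) integrable_on {0..1}" if "0 < x" "x \<le> 1"
proof (rule bdd_meas_integrable[OF meas_g1, where C="1"])
  fix z :: real assume z: "z \<in> {0..1}"
  have "\<bar>x * z * B2t (1/(x*z)) * B1 (1/(z*y))\<bar> = x * z * \<bar>B2t (1/(x*z))\<bar> * \<bar>B1 (1/(z*y))\<bar>"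
    using z that by (simp add: abs_mult)
  also have "\<dots> \<le> 1 * 1 * 1 * 1" using z that B2t_bound[of "1/(x*z)"] B1_bound[of "1/(z*y)"]
    by (intro mult_mono) auto
  finally show "\<bar>x * z * B2t (1/(x*z)) * B1 (1/(z*y))\<bar> \<le> 1" by simp
qed

context
  fixes x y :: real
  assumes xy: "0 < x" "x \<le> 1" "0 < y" "y \<le> 1"
begin

lemma g1_bound: "\<bar>integral {0..1} (\<lambda>z. x * z * B2t (1/(x*z)) * B1 (1/(z*y)))\<bar> \<le> x/24"
proof -
  have "norm (integral {0..1} (\<lambda>z. x * z * B2t (1/(x*z)) * B1 (1/(z*y)))) \<le> integral {0..1} (\<lambda>z. (x/12) * z)"
  proof (rule integral_norm_bound_integral[OF g1_int[OF xy(1,2)]])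
    show "(\<lambda>z. (x/12) * z) integrable_on {0..1}" using lin_int[of 0 1 "x/12"] by (auto simp: integrable_on_def)
    fix z :: real assume z: "z \<in> {0..1}"
    have "\<bar>x * z * B2t (1/(x*z)) * B1 (1/(z*y))\<bar> = x * z * \<bar>B2t (1/(x*z))\<bar> * \<bar>B1 (1/(z*y))\<bar>"
      using z xy by (simp add: abs_mult)
    also have "\<dots> \<le> x * z * (1/6) * (1/2)" using z xy B2t_bound[of "1/(x*z)"] B1_bound[of "1/(z*y)"]
      by (intro mult_mono) auto
    finally show "norm (x * z * B2t (1/(x*z)) * B1 (1/(z*y))) \<le> (x/12) * z" by simp
  qed
  moreover have "integral {0..1} (\<lambda>z. (x/12) * z) = x/24"
    using integral_unique[OF lin_int[of 0 1 "x/12"]] by simp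
  ultimately show ?thesis by simp
qed

lemma gg_int_bound: "\<bar>integral {0..1} (gg x y)\<bar> \<le> x/24 + x/(2*y) * (x * sqrt 3 / 54)"
proof -
  have e: "gg x y = (\<lambda>z. x * z * B2t (1/(x*z)) * B1 (1/(z*y)) + x/(2*y) * B2t (1/(x*z)))"
    unfolding gg_def[abs_def] using xy by (intro ext) (simp add: field_simps)
  have "integral {0..1} (gg x y) = integral {0..1} (\<lambda>z. x * z * B2t (1/(x*z)) * B1 (1/(z*y))) + integral {0..1} (\<lambda>z. x/(2*y) * B2t (1/(x*z)))"
    unfolding e by (rule integral_add[OF g1_int[OF xy(1,2)]]) (use integrable_on_cmult_left[OF b_int, of "x/(2*y)"] in simp)
  also have "integral {0..1} (\<lambda>z. x/(2*y) * B2t (1/(x*z))) = x/(2*y) * integral {0..1} (\<lambda>z. B2t (1/(x*z)))"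
    using integral_mult[OF b_int] by simp
  finally have eq: "integral {0..1} (gg x y) = integral {0..1} (\<lambda>z. x * z * B2t (1/(x*z)) * B1 (1/(z*y))) + x/(2*y) * integral {0..1} (\<lambda>z. B2t (1/(x*z)))" .
  have hb: "\<bar>x/(2*y) * integral {0..1} (\<lambda>z. B2t (1/(x*z)))\<bar> \<le> x/(2*y) * (x * sqrt 3 / 54)"
  proof -
    have "\<bar>x/(2*y)\<bar> = x/(2*y)" using xy by simp
    moreover have "x/(2*y) \<ge> 0" using xy by simp
    ultimately show ?thesis unfolding abs_mult using mult_left_mono[OF b_bound[OF xy(1)], of "x/(2*y)"] by simp
  qed
  show ?thesis unfolding eq
    using g1_bound hb abs_triangle_ineq[of "integral {0..1} (\<lambda>z. x * z * B2t (1/(x*z)) * B1 (1/(z*y)))" "x/(2*y) * integral {0..1} (\<lambda>z. B2t (1/(x*z)))"]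
    by linarith
qed

lemma f_int: "(\<lambda>z. K x z * K z y) integrable_on {0..1}"
proof (rule bdd_meas_integrable[OF meas_f, where C="1"])
  fix z :: real
  have "\<bar>K x z * K z y\<bar> \<le> 1 * 1" unfolding abs_mult using K_bound[of x z] K_bound[of z y] by (intro mult_mono) auto
  then show "\<bar>K x z * K z y\<bar> \<le> 1" by simp
qed

lemma gg_int: "gg x y integrable_on {0..1}"
  by (rule bdd_meas_integrable[OF meas_gg, where C="1/12 + 1/12 * (1/y)"]) (use gg_bound[OF xy] in auto)

lemma K2_id: "K2 x y = C0 x y + x / (2 * y^2) * infsum (cc x y) {m. 1/y < real m} - integral {0..1} (gg x y)"
proof -
  have "integral {0..1} (phi x y) = K2 x y + integral {0..1} (gg x y)"
    unfolding phi_def[abs_def] K2_def by (rule integral_add[OF f_int gg_int])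
  then show ?thesis using main_identity[OF xy] by simp
qed

lemma C0_bound: "\<bar>C0 x y\<bar> \<le> x/24"
proof -
  have "\<bar>C0 x y\<bar> = x/2 * \<bar>B2t (1/x)\<bar> * \<bar>B1 (1/y)\<bar>" unfolding C0_def using xy by (simp add: abs_mult)
  also have "\<dots> \<le> x/2 * (1/6) * (1/2)" using xy B2t_bound B1_bound by (intro mult_mono) auto
  finally show ?thesis by simp
qed

lemma partial_abs: "\<bar>\<Sum>m\<in>{m0 y..m0 y + n}. cc x y m\<bar> \<le> 1/6 * (\<Sum>m\<in>{m0 y..m0 y + n}. 1/(real m)^2)"
proof -
  have "\<bar>\<Sum>m\<in>{m0 y..m0 y + n}. cc x y m\<bar> \<le> (\<Sum>m\<in>{m0 y..m0 y + n}. \<bar>cc x y m\<bar>)" by (rule sum_abs)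
  also have "\<dots> \<le> (\<Sum>m\<in>{m0 y..m0 y + n}. 1/6 * (1/(real m)^2))"
  proof (rule sum_mono)
    fix m assume "m \<in> {m0 y..m0 y + n}"
    have "\<bar>cc x y m\<bar> = \<bar>B2t (real m * y / x)\<bar> / (real m)^2" unfolding cc_def by (simp add: abs_div)
    also have "\<dots> \<le> (1/6) / (real m)^2" using B2t_bound by (intro divide_right_mono) auto
    finally show "\<bar>cc x y m\<bar> \<le> 1/6 * (1/(real m)^2)" by simp
  qed
  finally show ?thesis by (simp add: sum_distrib_left)
qed

lemma Sigma_abs: "\<bar>infsum (cc x y) {m. 1/y < real m}\<bar> \<le> 1/6 * (y^2 + y)"
proof -
  define r where "r = 1 / real (m0 y)"
  have m0p: "real (m0 y) > 0" using m0_props(3)[OF xy] by simp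
  have ry: "r < y" unfolding r_def using m0_props(1)[OF xy] m0p xy by (simp add: field_simps)
  have r0: "r > 0" unfolding r_def using m0p by simp
  have "\<bar>\<Sum>m\<in>{m0 y..m0 y + n}. cc x y m\<bar> \<le> 1/6 * (r^2 + r)" for n
  proof -
    have "(\<Sum>m\<in>{m0 y..m0 y + n}. 1/(real m)^2) \<le> r^2 + r"
    proof -
      have "(\<Sum>m\<in>{m0 y..m0 y + n}. 1/(real m)^2) \<le> 1/(real (m0 y))^2 + 1/real (m0 y) - 1/real (m0 y + n)"
        by (rule tel_up[OF m0_props(3)[OF xy]])
      moreover have "1/real (m0 y + n) \<ge> 0" by simp
      ultimately have "(\<Sum>m\<in>{m0 y..m0 y + n}. 1/(real m)^2) \<le> 1/(real (m0 y))^2 + 1/real (m0 y)" by linarith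
      then show ?thesis unfolding r_def by (simp add: power_divide)
    qed
    then have "1/6 * (\<Sum>m\<in>{m0 y..m0 y + n}. 1/(real m)^2) \<le> 1/6 * (r^2 + r)" by (rule mult_left_mono) simp
    then show ?thesis using partial_abs[of n] by (rule order_trans[rotated])
  qed
  then have "\<bar>infsum (cc x y) {m. 1/y < real m}\<bar> \<le> 1/6 * (r^2 + r)"
    by (intro LIMSEQ_le_const2[OF tendsto_rabs[OF series_lim[OF xy]]]) auto
  also have "\<dots> \<le> 1/6 * (y^2 + y)" using ry r0 by (intro mult_left_mono add_mono power_mono) auto
  finally show ?thesis .
qed

end

lemma cc_diag: "m \<ge> 1 \<Longrightarrow> x > 0 \<Longrightarrow> cc x x m = 1/6 * (1/(real m)^2)"
  unfolding cc_def B2t_def by (simp add: frac_def)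

lemma Sigma_diag:
  fixes x :: real assumes xy: "0 < x" "x \<le> 1"
  defines "r \<equiv> 1 / real (m0 x)"
  shows "1/6 * r \<le> infsum (cc x x) {m. 1/x < real m}" "infsum (cc x x) {m. 1/x < real m} \<le> 1/6 * (r^2 + r)"
proof -
  have xy4: "0 < x" "x \<le> 1" "0 < x" "x \<le> 1" using xy by auto
  have m0p: "real (m0 x) > 0" using m0_props(3)[OF xy4] by simp
  have ps: "(\<Sum>m\<in>{m0 x..m0 x + n}. cc x x m) = 1/6 * (\<Sum>m\<in>{m0 x..m0 x + n}. 1/(real m)^2)" for n
    unfolding sum_distrib_left using m0_props(3)[OF xy4] xy by (intro sum.cong) (auto simp: cc_diag)
  have up: "(\<Sum>m\<in>{m0 x..m0 x + n}. cc x x m) \<le> 1/6 * (r^2 + r)" for n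
  proof -
    have "(\<Sum>m\<in>{m0 x..m0 x + n}. 1/(real m)^2) \<le> r^2 + r"
    proof -
      have "(\<Sum>m\<in>{m0 x..m0 x + n}. 1/(real m)^2) \<le> 1/(real (m0 x))^2 + 1/real (m0 x) - 1/real (m0 x + n)"
        by (rule tel_up[OF m0_props(3)[OF xy4]])
      moreover have "1/real (m0 x + n) \<ge> 0" by simp
      ultimately have "(\<Sum>m\<in>{m0 x..m0 x + n}. 1/(real m)^2) \<le> 1/(real (m0 x))^2 + 1/real (m0 x)" by linarith
      then show ?thesis unfolding r_def by (simp add: power_divide)
    qed
    then show ?thesis unfolding ps by simp
  qed
  show "infsum (cc x x) {m. 1/x < real m} \<le> 1/6 * (r^2 + r)"
    by (intro LIMSEQ_le_const2[OF series_lim[OF xy4]]) (use up in auto)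
  have lo: "1/6 * (r - 1/real (m0 x + n + 1)) \<le> (\<Sum>m\<in>{m0 x..m0 x + n}. cc x x m)" for n
    unfolding ps r_def using tel_lo[OF m0_props(3)[OF xy4], of n] by simp
  have "(\<lambda>n. inverse (real (n + (m0 x + 1)))) \<longlonglongrightarrow> 0"
    using LIMSEQ_ignore_initial_segment[OF lim_inverse_n', of "m0 x + 1"] by (simp add: inverse_eq_divide)
  then have "(\<lambda>n. 1/real (m0 x + n + 1)) \<longlonglongrightarrow> 0" by (simp add: inverse_eq_divide add.commute add.left_commute)
  then have L: "(\<lambda>n. 1/6 * (r - 1/real (m0 x + n + 1))) \<longlonglongrightarrow> 1/6 * (r - 0)"
    by (intro tendsto_mult_left tendsto_diff tendsto_const)
  show "1/6 * r \<le> infsum (cc x x) {m. 1/x < real m}"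
    using LIMSEQ_le[OF L series_lim[OF xy4]] lo by auto
qed

lemma s3: "1 / (36 * sqrt 3) = sqrt 3 / (108::real)"
proof -
  have q: "sqrt 3 * sqrt 3 = (3::real)" by simp
  have "sqrt 3 / 108 = sqrt 3 / (36 * (sqrt 3 * sqrt 3))" using q by simp
  also have "\<dots> = 1 / (36 * sqrt 3)" by (simp add: field_simps)
  finally show ?thesis by simp
qed

lemma cc_fun: "cc x y = (\<lambda>m::nat. B2t (real m * y / x) / (real m)^2)"
  by (simp add: cc_def[abs_def])

lemma claim1:
  fixes x y :: real
  assumes xy: "0 < x" "x \<le> 1" "0 < y" "y \<le> 1"
  shows "\<bar>K2 x y\<bar> / x \<le> 1/12 + x / ((36 * sqrt 3) * y)
           + 1 / (2 * y^2) * \<bar>infsum (\<lambda>m::nat. B2t (real m * y / x) / (real m)^2) {m. real m > 1 / y}\<bar>"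
proof -
  define S where "S = infsum (\<lambda>m::nat. B2t (real m * y / x) / (real m)^2) {m. real m > 1 / y}"
  have id: "K2 x y = C0 x y + x / (2 * y^2) * S - integral {0..1} (gg x y)"
    using K2_id[OF xy] unfolding S_def cc_fun by simp
  have tS: "\<bar>x / (2 * y^2) * S\<bar> = x * (1 / (2 * y^2) * \<bar>S\<bar>)" using xy by (simp add: abs_mult)
  have tg: "x / (2*y) * (x * sqrt 3 / 54) = x * (x / ((36 * sqrt 3) * y))"
  proof -
    have "x * (x / ((36 * sqrt 3) * y)) = x * x / y * (1 / (36 * sqrt 3))" by (simp add: field_simps)
    also have "\<dots> = x / (2*y) * (x * sqrt 3 / 54)" unfolding s3 by (simp add: field_simps)
    finally show ?thesis by simp
  qed
  have "\<bar>K2 x y\<bar> \<le> \<bar>C0 x y\<bar> + \<bar>x / (2 * y^2) * S\<bar> + \<bar>integral {0..1} (gg x y)\<bar>"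
    unfolding id by linarith
  also have "\<dots> \<le> x/24 + x * (1 / (2 * y^2) * \<bar>S\<bar>) + (x/24 + x * (x / ((36 * sqrt 3) * y)))"
    using C0_bound[OF xy] gg_int_bound[OF xy] tS tg by linarith
  also have "\<dots> = (1/12 + x / ((36 * sqrt 3) * y) + 1 / (2 * y^2) * \<bar>S\<bar>) * x"
    by (simp add: algebra_simps)
  finally show ?thesis unfolding S_def[symmetric] using xy by (simp add: pos_divide_le_eq)
qed

lemma claim2_aux:
  fixes x y :: real
  assumes xy: "0 < x" "x \<le> 1" "0 < y" "y \<le> 1" and le: "x \<le> y"
  shows "\<bar>K2 x y\<bar> \<le> (1/4 + 1 / (36 * sqrt 3)) * (x / y)"
proof -
  define S where "S = infsum (cc x y) {m. 1/y < real m}"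
  define q where "q = x / y"
  have qp: "q > 0" unfolding q_def using xy by simp
  have id: "K2 x y = C0 x y + x / (2 * y^2) * S - integral {0..1} (gg x y)"
    using K2_id[OF xy] unfolding S_def by simp
  have A: "\<bar>S\<bar> \<le> 1/6 * (y^2 + y)" unfolding S_def by (rule Sigma_abs[OF xy])
  have h1: "\<bar>x / (2 * y^2) * S\<bar> \<le> x/12 + q/12"
  proof -
    have "\<bar>x / (2 * y^2) * S\<bar> = x / (2 * y^2) * \<bar>S\<bar>" using xy by (simp add: abs_mult)
    also have "\<dots> \<le> x / (2 * y^2) * (1/6 * (y^2 + y))" using A xy by (intro mult_left_mono) auto
    also have "\<dots> = x/12 + q/12" unfolding q_def using xy by (simp add: field_simps power2_eq_square)
    finally show ?thesis .
  qed
  have h2: "x/12 \<le> q/12" unfolding q_def using xy by (simp add: field_simps)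
  have h3: "x / (2*y) * (x * sqrt 3 / 54) \<le> sqrt 3 / 108 * q"
  proof -
    have "x / (2*y) * (x * sqrt 3 / 54) = (sqrt 3 / 108 * q) * x" unfolding q_def by (simp add: field_simps)
    also have "\<dots> \<le> (sqrt 3 / 108 * q) * 1" using xy qp by (intro mult_left_mono) auto
    finally show ?thesis by simp
  qed
  have "\<bar>K2 x y\<bar> \<le> \<bar>C0 x y\<bar> + \<bar>x / (2 * y^2) * S\<bar> + \<bar>integral {0..1} (gg x y)\<bar>"
    unfolding id by linarith
  also have "\<dots> \<le> q/4 + sqrt 3 / 108 * q"
    using C0_bound[OF xy] gg_int_bound[OF xy] h1 h2 h3 by linarith
  also have "\<dots> = (1/4 + 1 / (36 * sqrt 3)) * (x / y)" unfolding s3 q_def by (simp add: algebra_simps)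
  finally show ?thesis .
qed

lemma claim2:
  fixes x y :: real
  assumes xy: "0 < x" "x \<le> 1" "0 < y" "y \<le> 1"
  shows "\<bar>K2 x y\<bar> \<le> (1/4 + 1 / (36 * sqrt 3)) * (min x y / max x y)"
proof (cases "x \<le> y")
  case True
  then show ?thesis using claim2_aux[OF xy True] by (simp add: min_def max_def)
next
  case False
  then have "y \<le> x" by simp
  then have "\<bar>K2 y x\<bar> \<le> (1/4 + 1 / (36 * sqrt 3)) * (y / x)" using claim2_aux[of y x] xy by simp
  then show ?thesis using False K2_sym[of x y] by (simp add: min_def max_def)
qed

lemma claim3:
  fixes x :: real
  assumes xy: "0 < x" "x \<le> 1"
  shows "\<bar>K2 x x - 1/12\<bar> \<le> (1/6 + 1 / (36 * sqrt 3)) * x"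
proof -
  have xy4: "0 < x" "x \<le> 1" "0 < x" "x \<le> 1" using xy by auto
  define S where "S = infsum (cc x x) {m. 1/x < real m}"
  define r where "r = 1 / real (m0 x)"
  have m0p: "real (m0 x) > 0" using m0_props(3)[OF xy4] by simp
  have rx: "r < x" unfolding r_def using m0_props(1)[OF xy4] m0p xy by (simp add: field_simps)
  have r0: "r > 0" unfolding r_def using m0p by simp
  have rlo: "x / (1 + x) \<le> r"
  proof -
    have "real (m0 x) \<le> (1 + x) / x" using m0_props(2)[OF xy4] xy by (simp add: field_simps)
    moreover have "0 < (1 + x) / x * real (m0 x)" using xy m0p by simp
    ultimately have "1 / ((1 + x) / x) \<le> 1 / real (m0 x)" by (intro divide_left_mono) auto
    then show ?thesis unfolding r_def by simp
  qed
  have Slo: "1/6 * r \<le> S" and Sup: "S \<le> 1/6 * (r^2 + r)"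
    unfolding S_def r_def using Sigma_diag[OF xy] by auto
  have id: "K2 x x = C0 x x + x / (2 * x^2) * S - integral {0..1} (gg x x)"
    using K2_id[OF xy4] unfolding S_def by simp
  have T: "x / (2 * x^2) * S = S / (2*x)" using xy by (simp add: field_simps power2_eq_square)
  have Tup: "S / (2*x) \<le> 1/12 + x/12"
  proof -
    have "r^2 + r \<le> x^2 + x" using rx r0 by (intro add_mono power_mono) auto
    then have "S \<le> 1/6 * (x^2 + x)" using Sup by (meson order_trans mult_left_mono zero_le_divide_1_iff zero_le_numeral)
    then have "S / (2*x) \<le> 1/6 * (x^2 + x) / (2*x)" using xy by (intro divide_right_mono) auto
    also have "\<dots> = 1/12 + x/12" using xy by (simp add: field_simps power2_eq_square)
    finally show ?thesis .
  qed
  have Tlo: "1/12 - x/12 \<le> S / (2*x)"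
  proof -
    have "1/6 * (x / (1 + x)) \<le> S" using rlo Slo by linarith
    then have "1/6 * (x / (1 + x)) / (2*x) \<le> S / (2*x)" using xy by (intro divide_right_mono) auto
    moreover have "1/6 * (x / (1 + x)) / (2*x) = 1 / (12 * (1 + x))"
    proof -
      have "1 + x \<noteq> 0" "x \<noteq> 0" using xy by auto
      moreover have "x * 12 + x * (x * 12) > 0" using xy by (intro add_pos_pos mult_pos_pos) auto
      ultimately show ?thesis by (simp add: field_simps)
    qed
    moreover have "1/12 - x/12 \<le> 1 / (12 * (1 + x))"
    proof -
      have "(1 - x) * (1 + x) \<le> 1" by (simp add: algebra_simps)
      then have "(1 - x) / 12 \<le> 1 / (12 * (1 + x))" using xy by (simp add: field_simps)
      then show ?thesis by simp
    qed
    ultimately show ?thesis by linarith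
  qed
  have gg: "\<bar>integral {0..1} (gg x x)\<bar> \<le> x/24 + sqrt 3 / 108 * x"
  proof -
    have "x / (2*x) * (x * sqrt 3 / 54) = sqrt 3 / 108 * x" using xy by (simp add: field_simps)
    then show ?thesis using gg_int_bound[OF xy4] by linarith
  qed
  have "\<bar>K2 x x - 1/12\<bar> \<le> \<bar>C0 x x\<bar> + \<bar>S / (2*x) - 1/12\<bar> + \<bar>integral {0..1} (gg x x)\<bar>"
    unfolding id T by linarith
  also have "\<dots> \<le> x/6 + sqrt 3 / 108 * x"
    using C0_bound[OF xy4] gg Tup Tlo by linarith
  also have "\<dots> = (1/6 + 1 / (36 * sqrt 3)) * x" unfolding s3 by (simp add: algebra_simps)
  finally show ?thesis .
qed

theorem lemma2p4:
  fixes x y :: real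
  assumes "0 < x" "x \<le> 1" "0 < y" "y \<le> 1"
  shows "\<bar>K2 x y\<bar> / x \<le> 1/12 + x / ((36 * sqrt 3) * y)
           + 1 / (2 * y^2) * \<bar>infsum (\<lambda>m::nat. B2t (real m * y / x) / (real m)^2) {m. real m > 1 / y}\<bar>
       \<and> \<bar>K2 x y\<bar> \<le> (1/4 + 1 / (36 * sqrt 3)) * (min x y / max x y)
       \<and> \<bar>K2 x x - 1/12\<bar> \<le> (1/6 + 1 / (36 * sqrt 3)) * x"
  using claim1[OF assms] claim2[OF assms] claim3[OF assms(1,2)] by blast

end
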